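(* Let $n_1,n_2\ge1$, $n=n_1n_2$, and let $R=(r_{i,j})_{i,j=0}^{n-1}$ be a Hermitian positive definite block Toeplitz matrix with $n_2\times n_2$ blocks of size $n_1\times n_1$ (i.e. $R=(R_{b-a})_{a,b=0}^{n_2-1}$, $R_m\in\mathbb{C}^{n_1\times n_1}$, $R_{-m}=R_m^H$). Define $n_1\times n_1$ matrices $P_0,\dots,P_{n_2-1}$ and $Q_0,\dots,Q_{n_2-1}$ by $$\begin{bmatrix}P_0\\ P_1\\ \vdots\\ P_{n_2-1}\end{bmatrix}:=\big[p_{0,n-1}\ p_{1,n-1}\ \cdots\ p_{n_1-1,n-1}\big],\qquad \begin{bmatrix}Q_{n_2-1}\\ \vdots\\ Q_1\\ Q_0\end{bmatrix}:=\big[q_{0,n-n_1}\ \cdots\ q_{0,n-2}\ q_{0,n-1}\big],$$ and the diagonal matrices $V'=\mathrm{diag}(v'_{0,n-1},v'_{1,n-1},\dots,v'_{n_1-1,n-1})$, $V=\mathrm{diag}(v_{0,n-n_1},\dots,v_{0,n-2},v_{0,n-1})$. Let $L_p$ be the $n\times n$ block upper triangular block Toeplitz matrix whose $(a,b)$ block is $P_{b-a}^T$ for $b\ge a$ and $0$ for $b<a$, and $L_q$ the $n\times n$ block Toeplitz matrix whose $(a,b)$ block is $Q_{n_2-(b-a)}^T$ for $b>a$ and $0$ for $b\le a$ ($0\le a,b\le n_2-1$). Let $D(M)$ denote the $n\times n$ block diagonal matrix with $n_2$ diagonal blocks all equal to $M$. Then $$R^{-1}=L_p^{H}\,D(V'^{-1})\,L_p-L_q^{H}\,D(V^{-1})\,L_q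 .$$
   Context: $X^H$ denotes the conjugate transpose. Let $e_0,\dots,e_{n-1}$ be the canonical basis column vectors of $\mathbb{C}^n$. Generalized reflection coefficients of $R$: $p_{k,k}=q_{k,k}=e_k$ for $0\le k\le n-1$; $v_{k,l}:=q_{k,l}^TRe_l$, $v'_{k,l}:=p_{k,l}^TRe_k$ (positive reals); and for $0\le k<l\le n-1$, recursively in $l-k$: $a_{k,l}=\dfrac{p_{k,l-1}^TRe_l}{v_{k+1,l}}$, $a'_{k,l}=\dfrac{q_{k+1,l}^TRe_k}{v'_{k,l-1}}$, $p_{k,l}=p_{k,l-1}-a_{k,l}q_{k+1,l}$, $q_{k,l}=q_{k+1,l}-a'_{k,l}p_{k,l-1}$. *)

theory Defs
  imports "Jordan_Normal_Form.Schur_Decomposition"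
begin

text \<open>For an n x n matrix R,
  grc R n d k = (p_{k,k+d}, q_{k,k+d}), defined by recursion on d = l - k.
  Transposes (not conjugate transposes) are used, as in the paper:
  p^T R e_l = p \<bullet> col R l (the bilinear scalar product).\<close>

fun grc :: "complex mat \<Rightarrow> nat \<Rightarrow> nat \<Rightarrow> nat \<Rightarrow> complex vec \<times> complex vec" where
  "grc R n 0 k = (unit_vec n k, unit_vec n k)"
| "grc R n (Suc d) k =
     (let pkl1 = fst (grc R n d k);         \<comment> \<open>p_{k,l-1}\<close>
          qk1l = snd (grc R n d (Suc k));   \<comment> \<open>q_{k+1,l}\<close>
          l = k + Suc d;
          a  = (pkl1 \<bullet> col R l) / (qk1l \<bullet> col R l);   \<comment> \<open>a_{k,l} = p_{k,l-1}^T R e_l / v_{k+1,l}\<close>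
          a' = (qk1l \<bullet> col R k) / (pkl1 \<bullet> col R k)    \<comment> \<open>a'_{k,l} = q_{k+1,l}^T R e_k / v'_{k,l-1}\<close>
      in (pkl1 - a \<cdot>\<^sub>v qk1l, qk1l - a' \<cdot>\<^sub>v pkl1))"

definition pvec :: "complex mat \<Rightarrow> nat \<Rightarrow> nat \<Rightarrow> nat \<Rightarrow> complex vec" where
  "pvec R n k l = fst (grc R n (l - k) k)"

definition qvec :: "complex mat \<Rightarrow> nat \<Rightarrow> nat \<Rightarrow> nat \<Rightarrow> complex vec" where
  "qvec R n k l = snd (grc R n (l - k) k)"

definition vcoef :: "complex mat \<Rightarrow> nat \<Rightarrow> nat \<Rightarrow> nat \<Rightarrow> complex" where
  "vcoef R n k l = qvec R n k l \<bullet> col R l"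

definition vcoef' :: "complex mat \<Rightarrow> nat \<Rightarrow> nat \<Rightarrow> nat \<Rightarrow> complex" where
  "vcoef' R n k l = pvec R n k l \<bullet> col R k"

definition herm_pos_def :: "nat \<Rightarrow> complex mat \<Rightarrow> bool" where
  "herm_pos_def n R \<longleftrightarrow> R \<in> carrier_mat n n \<and> mat_adjoint R = R \<and>
     (\<forall>x \<in> carrier_vec n. x \<noteq> 0\<^sub>v n \<longrightarrow>
        Im (conjugate x \<bullet> (R *\<^sub>v x)) = 0 \<and> Re (conjugate x \<bullet> (R *\<^sub>v x)) > 0)"

definition block_mat :: "nat \<Rightarrow> nat \<Rightarrow> (nat \<Rightarrow> nat \<Rightarrow> complex mat) \<Rightarrow> complex mat" where
  "block_mat n1 n2 B = mat (n1 * n2) (n1 * n2)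
     (\<lambda>(r, c). B (r div n1) (c div n1) $$ (r mod n1, c mod n1))"

definition blockdiag :: "nat \<Rightarrow> nat \<Rightarrow> complex mat \<Rightarrow> complex mat" where
  "blockdiag n1 n2 M = block_mat n1 n2 (\<lambda>a b. if a = b then M else 0\<^sub>m n1 n1)"

definition diag_of :: "nat \<Rightarrow> (nat \<Rightarrow> complex) \<Rightarrow> complex mat" where
  "diag_of m f = mat m m (\<lambda>(i, j). if i = j then f i else 0)"

end

theory Submission
  imports Defs
begin

lemma adjoint_index: "A \<in> carrier_mat n m \<Longrightarrow> i < m \<Longrightarrow> j < n \<Longrightarrow> mat_adjoint A $$ (i,j) = cnj (A $$ (j,i))"
  unfolding mat_adjoint_def by (simp add: mat_of_rows_def)
lemma adjoint_carrier: "A \<in> carrier_mat n m \<Longrightarrow> mat_adjoint A \<in> carrier_mat m n"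
  unfolding mat_adjoint_def by (simp add: mat_of_rows_def)

lemma sum_lessThan_add: "(\<Sum>r<(x::nat)+y. f r) = (\<Sum>r<x. f r) + (\<Sum>c<y. f (x+c))"
  by (induction y) (simp_all add: add.assoc)

lemma sum_lessThan_mult: "(\<Sum>r<n1*(m::nat). f r) = (\<Sum>a<m. \<Sum>c<n1. f (a*n1+c))"
proof (induction m)
  case (Suc m)
  have "(\<Sum>r<n1 * Suc m. f r) = (\<Sum>r<n1*m. f r) + (\<Sum>c<n1. f (n1*m + c))"
    using sum_lessThan_add[of f "n1*m" n1] by (simp add: add.commute)
  then show ?case using Suc by (simp add: mult.commute)
qed simp

lemma quad:
  fixes R :: "complex mat"
  assumes x: "x \<in> carrier_vec n" and R: "R \<in> carrier_mat n n"
  shows "x \<bullet> (R *\<^sub>v conjugate x) = (\<Sum>j<n. (x \<bullet> col R j) * cnj (x$j))"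
proof -
  have "x \<bullet> (R *\<^sub>v conjugate x) = (\<Sum>i<n. x$i * (\<Sum>j<n. R$$(i,j) * cnj (x$j)))"
  proof -
    have "\<And>i. i < n \<Longrightarrow> (R *\<^sub>v conjugate x) $ i = (\<Sum>j<n. R$$(i,j) * cnj (x$j))"
      using x R by (simp add: scalar_prod_def atLeast0LessThan)
    then show ?thesis using x R unfolding scalar_prod_def[of x] by (simp add: atLeast0LessThan)
  qed
  also have "\<dots> = (\<Sum>i<n. \<Sum>j<n. x$i * R$$(i,j) * cnj (x$j))"
    by (simp add: sum_distrib_left mult.assoc)
  also have "\<dots> = (\<Sum>j<n. \<Sum>i<n. x$i * R$$(i,j) * cnj (x$j))"
    by (rule sum.swap)
  also have "\<dots> = (\<Sum>j<n. (\<Sum>i<n. x$i * R$$(i,j)) * cnj (x$j))"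
    by (simp add: sum_distrib_right)
  also have "\<dots> = (\<Sum>j<n. (x \<bullet> col R j) * cnj (x$j))"
    using x R by (auto simp: scalar_prod_def atLeast0LessThan intro!: sum.cong)
  finally show ?thesis .
qed

lemma quad_supp:
  fixes R :: "complex mat"
  assumes x: "x \<in> carrier_vec n" and R: "R \<in> carrier_mat n n"
    and k0: "k0 < n" and xk: "x $ k0 = 1"
    and z: "\<And>j. j < n \<Longrightarrow> j \<noteq> k0 \<Longrightarrow> x$j = 0 \<or> x \<bullet> col R j = 0"
  shows "x \<bullet> (R *\<^sub>v conjugate x) = x \<bullet> col R k0"
proof -
  have "x \<bullet> (R *\<^sub>v conjugate x) = (\<Sum>j<n. (x \<bullet> col R j) * cnj (x$j))" by (rule quad[OF x R])
  also have "\<dots> = (\<Sum>j\<in>{k0}. (x \<bullet> col R j) * cnj (x$j))"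
    by (rule sum.mono_neutral_right) (use k0 z in auto)
  finally show ?thesis using xk by simp
qed

lemma pd_pos:
  fixes R :: "complex mat"
  assumes hpd: "herm_pos_def n R" and x: "x \<in> carrier_vec n"
    and k0: "k0 < n" and xk: "x $ k0 = 1"
    and z: "\<And>j. j < n \<Longrightarrow> j \<noteq> k0 \<Longrightarrow> x$j = 0 \<or> x \<bullet> col R j = 0"
  shows "Re (x \<bullet> col R k0) > 0 \<and> Im (x \<bullet> col R k0) = 0"
proof -
  have R: "R \<in> carrier_mat n n" using hpd by (simp add: herm_pos_def_def)
  have cx: "conjugate x \<in> carrier_vec n" using x by simp
  have "conjugate x \<noteq> 0\<^sub>v n"
  proof
    assume "conjugate x = 0\<^sub>v n"
    then have "conjugate x $ k0 = 0" using k0 by simp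
    then show False using xk k0 x by simp
  qed
  then have "Im (conjugate (conjugate x) \<bullet> (R *\<^sub>v conjugate x)) = 0 \<and> Re (conjugate (conjugate x) \<bullet> (R *\<^sub>v conjugate x)) > 0"
    using hpd cx unfolding herm_pos_def_def by blast
  then show ?thesis using quad_supp[OF x R k0 xk z] by simp
qed

lemma pd_zero:
  fixes R :: "complex mat"
  assumes hpd: "herm_pos_def n R" and x: "x \<in> carrier_vec n"
    and z: "\<And>j. j < n \<Longrightarrow> x$j = 0 \<or> x \<bullet> col R j = 0"
  shows "x = 0\<^sub>v n"
proof (rule ccontr)
  assume ne: "x \<noteq> 0\<^sub>v n"
  have R: "R \<in> carrier_mat n n" using hpd by (simp add: herm_pos_def_def)
  have cx: "conjugate x \<in> carrier_vec n" using x by simp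
  have "conjugate x \<noteq> 0\<^sub>v n"
  proof
    assume "conjugate x = 0\<^sub>v n"
    then have "\<forall>i<n. conjugate x $ i = 0" by simp
    then have "\<forall>i<n. cnj (x$i) = 0" using x by simp
    then have "x = 0\<^sub>v n" using x by (intro eq_vecI) auto
    then show False using ne by simp
  qed
  then have "Re (conjugate (conjugate x) \<bullet> (R *\<^sub>v conjugate x)) > 0"
    using hpd cx unfolding herm_pos_def_def by blast
  moreover have "x \<bullet> (R *\<^sub>v conjugate x) = 0"
    unfolding quad[OF x R] by (rule sum.neutral) (use z in auto)
  ultimately show False by simp
qed

lemma lin_sprod:
  fixes p q c :: "complex vec"
  assumes "p \<in> carrier_vec n" "q \<in> carrier_vec n" "c \<in> carrier_vec n"
  shows "(p - a \<cdot>\<^sub>v q) \<bullet> c = p \<bullet> c - a * (q \<bullet> c)"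
  using assms by (simp add: minus_scalar_prod_distrib[of p n "a \<cdot>\<^sub>v q" c])

lemma lin_idx:
  fixes p q :: "complex vec"
  assumes "p \<in> carrier_vec n" "q \<in> carrier_vec n" "i < n"
  shows "(p - a \<cdot>\<^sub>v q) $ i = p $ i - a * q $ i"
  using assms by simp

definition good :: "complex mat \<Rightarrow> nat \<Rightarrow> nat \<Rightarrow> nat \<Rightarrow> complex vec \<Rightarrow> complex vec \<Rightarrow> bool" where
  "good R n k l p q \<longleftrightarrow> p \<in> carrier_vec n \<and> q \<in> carrier_vec n \<and>
    (\<forall>i<n. (i < k \<or> l < i) \<longrightarrow> p$i = 0 \<and> q$i = 0) \<and> p$k = 1 \<and> q$l = 1 \<and>
    (\<forall>j. k < j \<and> j \<le> l \<longrightarrow> p \<bullet> col R j = 0) \<and>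
    (\<forall>j. k \<le> j \<and> j < l \<longrightarrow> q \<bullet> col R j = 0) \<and>
    0 < Re (p \<bullet> col R k) \<and> Im (p \<bullet> col R k) = 0 \<and>
    0 < Re (q \<bullet> col R l) \<and> Im (q \<bullet> col R l) = 0"

lemma grc_good:
  assumes hpd: "herm_pos_def n R"
  shows "k + d < n \<Longrightarrow> good R n k (k+d) (fst (grc R n d k)) (snd (grc R n d k))"
proof (induction d arbitrary: k)
  case 0
  have R: "R \<in> carrier_mat n n" using hpd by (simp add: herm_pos_def_def)
  let ?e = "unit_vec n k :: complex vec"
  have e: "?e \<in> carrier_vec n" by simp
  have "0 < Re (?e \<bullet> col R k) \<and> Im (?e \<bullet> col R k) = 0"
    by (rule pd_pos[OF hpd e]) (use 0 in auto)
  then show ?case using 0 unfolding good_def by auto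
next
  case (Suc d)
  have R: "R \<in> carrier_mat n n" using hpd by (simp add: herm_pos_def_def)
  have cR: "\<And>j. col R j \<in> carrier_vec n" using R by (metis carrier_matD(1) col_dim)
  define p0 where "p0 = fst (grc R n d k)"
  define q0 where "q0 = snd (grc R n d (Suc k))"
  define l where "l = k + Suc d"
  define a where "a = (p0 \<bullet> col R l) / (q0 \<bullet> col R l)"
  define a' where "a' = (q0 \<bullet> col R k) / (p0 \<bullet> col R k)"
  have G1: "good R n k (k+d) p0 (snd (grc R n d k))" using Suc.IH[of k] Suc.prems unfolding p0_def by simp
  have G2: "good R n (Suc k) (Suc k + d) (fst (grc R n d (Suc k))) q0" using Suc.IH[of "Suc k"] Suc.prems unfolding q0_def by simp
  have eq: "grc R n (Suc d) k = (p0 - a \<cdot>\<^sub>v q0, q0 - a' \<cdot>\<^sub>v p0)"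
    by (simp add: Let_def p0_def q0_def l_def a_def a'_def)
  have p0: "p0 \<in> carrier_vec n" and q0: "q0 \<in> carrier_vec n" using G1 G2 unfolding good_def by auto
  have p0s: "\<And>i. i < n \<Longrightarrow> i < k \<or> k + d < i \<Longrightarrow> p0 $ i = 0" using G1 unfolding good_def by auto
  have q0s: "\<And>i. i < n \<Longrightarrow> i < Suc k \<or> Suc k + d < i \<Longrightarrow> q0 $ i = 0" using G2 unfolding good_def by auto
  have p0k: "p0 $ k = 1" and q0l: "q0 $ l = 1" using G1 G2 unfolding good_def l_def by auto
  have p0o: "\<And>j. k < j \<Longrightarrow> j \<le> k + d \<Longrightarrow> p0 \<bullet> col R j = 0" using G1 unfolding good_def by auto
  have q0o: "\<And>j. Suc k \<le> j \<Longrightarrow> j < l \<Longrightarrow> q0 \<bullet> col R j = 0" using G2 unfolding good_def l_def by auto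
  have vq: "q0 \<bullet> col R l \<noteq> 0" using G2 unfolding good_def l_def by auto
  have vp: "p0 \<bullet> col R k \<noteq> 0" using G1 unfolding good_def by auto
  define p where "p = p0 - a \<cdot>\<^sub>v q0"
  define q where "q = q0 - a' \<cdot>\<^sub>v p0"
  have p: "p \<in> carrier_vec n" and q: "q \<in> carrier_vec n" using p0 q0 unfolding p_def q_def by auto
  have pi: "\<And>i. i < n \<Longrightarrow> p $ i = p0 $ i - a * q0 $ i" unfolding p_def using p0 q0 by simp
  have qi: "\<And>i. i < n \<Longrightarrow> q $ i = q0 $ i - a' * p0 $ i" unfolding q_def using p0 q0 by simp
  have pc: "\<And>j. p \<bullet> col R j = p0 \<bullet> col R j - a * (q0 \<bullet> col R j)" unfolding p_def using lin_sprod[OF p0 q0 cR] .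
  have qc: "\<And>j. q \<bullet> col R j = q0 \<bullet> col R j - a' * (p0 \<bullet> col R j)" unfolding q_def using lin_sprod[OF q0 p0 cR] .
  have ln: "l < n" using Suc.prems l_def by simp
  have sup: "\<forall>i<n. (i < k \<or> l < i) \<longrightarrow> p$i = 0 \<and> q$i = 0"
    using pi qi p0s q0s l_def by auto
  have pk: "p $ k = 1" using pi p0k q0s ln l_def by simp
  have ql: "q $ l = 1" using qi q0l p0s ln l_def by simp
  have po: "\<forall>j. k < j \<and> j \<le> l \<longrightarrow> p \<bullet> col R j = 0"
  proof (intro allI impI)
    fix j assume j: "k < j \<and> j \<le> l"
    show "p \<bullet> col R j = 0"
    proof (cases "j = l")
      case True then show ?thesis using pc vq unfolding a_def by simp
    next
      case False then show ?thesis using pc p0o q0o j l_def by simp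
    qed
  qed
  have qo: "\<forall>j. k \<le> j \<and> j < l \<longrightarrow> q \<bullet> col R j = 0"
  proof (intro allI impI)
    fix j assume j: "k \<le> j \<and> j < l"
    show "q \<bullet> col R j = 0"
    proof (cases "j = k")
      case True then show ?thesis using qc vp unfolding a'_def by simp
    next
      case False then show ?thesis using qc p0o q0o j l_def by simp
    qed
  qed
  have kn: "k < n" using ln l_def by simp
  have ppos: "0 < Re (p \<bullet> col R k) \<and> Im (p \<bullet> col R k) = 0"
    by (rule pd_pos[OF hpd p kn pk]) (use sup po in force)
  have qpos: "0 < Re (q \<bullet> col R l) \<and> Im (q \<bullet> col R l) = 0"
    by (rule pd_pos[OF hpd q ln ql]) (use sup qo in force)
  show ?case unfolding eq fst_conv snd_conv p_def[symmetric] q_def[symmetric] good_def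
    using p q sup pk ql po qo ppos qpos l_def by simp
qed


definition inv_on :: "(nat \<Rightarrow> nat \<Rightarrow> complex) \<Rightarrow> nat set \<Rightarrow> (nat \<Rightarrow> nat \<Rightarrow> complex) \<Rightarrow> bool" where
  "inv_on r K Y \<longleftrightarrow> (\<forall>i j. (i \<notin> K \<or> j \<notin> K) \<longrightarrow> Y i j = 0) \<and>
     (\<forall>i\<in>K. \<forall>j\<in>K. (\<Sum>m\<in>K. Y i m * r m j) = (if i = j then 1 else 0))"

lemma border:
  fixes r Y :: "nat \<Rightarrow> nat \<Rightarrow> complex" and x :: "nat \<Rightarrow> complex"
  assumes fin: "finite K" and t: "t \<notin> K"
    and herm: "\<And>a b. a \<in> insert t K \<Longrightarrow> b \<in> insert t K \<Longrightarrow> cnj (r a b) = r b a"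
    and inv: "inv_on r K Y"
    and xt: "x t = 1"
    and xs: "\<And>i. i \<notin> insert t K \<Longrightarrow> x i = 0"
    and orth: "\<And>j. j \<in> K \<Longrightarrow> (\<Sum>m\<in>insert t K. x m * r m j) = 0"
    and vdef: "v = (\<Sum>m\<in>insert t K. x m * r m t)" and v0: "v \<noteq> 0"
  shows "inv_on r (insert t K) (\<lambda>i j. Y i j + cnj (x i) * x j / v)"
proof -
  let ?K' = "insert t K"
  have Ys: "\<And>i j. i \<notin> K \<or> j \<notin> K \<Longrightarrow> Y i j = 0" using inv unfolding inv_on_def by blast
  have Yi: "\<And>i j. i \<in> K \<Longrightarrow> j \<in> K \<Longrightarrow> (\<Sum>m\<in>K. Y i m * r m j) = (if i = j then 1 else 0)"
    using inv unfolding inv_on_def by blast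
  have rt: "r m t = - (\<Sum>m'\<in>K. cnj (x m') * r m m')" if m: "m \<in> K" for m
  proof -
    have "x t * r t m + (\<Sum>m'\<in>K. x m' * r m' m) = 0" using orth[OF m] fin t by simp
    then have "r t m = - (\<Sum>m'\<in>K. x m' * r m' m)" using xt by (simp add: eq_neg_iff_add_eq_0)
    then have "cnj (r t m) = - (\<Sum>m'\<in>K. cnj (x m') * cnj (r m' m))" by simp
    moreover have "(\<Sum>m'\<in>K. cnj (x m') * cnj (r m' m)) = (\<Sum>m'\<in>K. cnj (x m') * r m m')"
      using herm m by (intro sum.cong) auto
    ultimately show ?thesis using herm[of t m] m by simp
  qed
  have key: "(\<Sum>m\<in>K. Y i m * r m t) = - cnj (x i)" if i: "i \<in> K" for i
  proof -
    have "(\<Sum>m\<in>K. Y i m * r m t) = (\<Sum>m\<in>K. - (\<Sum>m'\<in>K. Y i m * (cnj (x m') * r m m')))"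
      using rt by (simp add: sum_distrib_left)
    also have "\<dots> = - (\<Sum>m'\<in>K. \<Sum>m\<in>K. Y i m * (cnj (x m') * r m m'))"
      by (simp add: sum_negf, subst sum.swap, rule refl)
    also have "\<dots> = - (\<Sum>m'\<in>K. cnj (x m') * (\<Sum>m\<in>K. Y i m * r m m'))"
      by (simp add: sum_distrib_left mult.left_commute)
    also have "\<dots> = - (\<Sum>m'\<in>K. cnj (x m') * (if i = m' then 1 else 0))"
      using Yi[OF i] by simp
    also have "\<dots> = - cnj (x i)" using i fin by (simp add: if_distrib sum.delta cong: if_cong)
    finally show ?thesis .
  qed
  show ?thesis unfolding inv_on_def
  proof (intro conjI allI impI ballI)
    fix i j assume "i \<notin> ?K' \<or> j \<notin> ?K'"
    then show "Y i j + cnj (x i) * x j / v = 0" using Ys xs by auto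
  next
    fix i j assume i: "i \<in> ?K'" and j: "j \<in> ?K'"
    have "(\<Sum>m\<in>?K'. (Y i m + cnj (x i) * x m / v) * r m j)
        = (\<Sum>m\<in>?K'. Y i m * r m j) + cnj (x i) / v * (\<Sum>m\<in>?K'. x m * r m j)"
      by (simp add: sum.distrib sum_distrib_left algebra_simps)
    also have "(\<Sum>m\<in>?K'. Y i m * r m j) = (\<Sum>m\<in>K. Y i m * r m j)"
      using fin t Ys by simp
    finally have S: "(\<Sum>m\<in>?K'. (Y i m + cnj (x i) * x m / v) * r m j)
        = (\<Sum>m\<in>K. Y i m * r m j) + cnj (x i) / v * (\<Sum>m\<in>?K'. x m * r m j)" .
    show "(\<Sum>m\<in>?K'. (Y i m + cnj (x i) * x m / v) * r m j) = (if i = j then 1 else 0)"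
    proof (cases "j = t")
      case False
      then have jK: "j \<in> K" using j by simp
      show ?thesis
      proof (cases "i = t")
        case True
        then show ?thesis using S orth[OF jK] Ys t False by simp
      next
        case False
        then show ?thesis using S orth[OF jK] Yi jK i by simp
      qed
    next
      case True
      then have Sv: "(\<Sum>m\<in>?K'. x m * r m j) = v" using vdef by simp
      show ?thesis
      proof (cases "i = t")
        case True
        then show ?thesis using S Sv Ys t xt v0 \<open>j = t\<close> by simp
      next
        case False
        then have iK: "i \<in> K" using i by simp
        show ?thesis using S Sv key[OF iK] v0 \<open>j = t\<close> False by simp
      qed
    qed
  qed
qed


lemma sprod_supp:
  fixes x :: "complex vec" and R :: "complex mat"
  assumes x: "x \<in> carrier_vec n" and R: "R \<in> carrier_mat n n" and K: "K \<subseteq> {..<n}"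
    and xs: "\<And>m. m < n \<Longrightarrow> m \<notin> K \<Longrightarrow> x$m = 0" and j: "j < n"
  shows "x \<bullet> col R j = (\<Sum>m\<in>K. x$m * R$$(m,j))"
proof -
  have "x \<bullet> col R j = (\<Sum>m<n. x$m * R$$(m,j))"
    using x R j by (simp add: scalar_prod_def atLeast0LessThan)
  also have "\<dots> = (\<Sum>m\<in>K. x$m * R$$(m,j))"
    by (rule sum.mono_neutral_right) (use K xs in auto)
  finally show ?thesis .
qed

lemma inv_unique:
  assumes hpd: "herm_pos_def n R" and K: "K \<subseteq> {..<n}"
    and Y: "inv_on (\<lambda>i j. R$$(i,j)) K Y" and Y': "inv_on (\<lambda>i j. R$$(i,j)) K Y'"
  shows "Y = Y'"
proof (intro ext)
  fix i j
  have R: "R \<in> carrier_mat n n" using hpd by (simp add: herm_pos_def_def)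
  show "Y i j = Y' i j"
  proof (cases "i \<in> K")
    case False then show ?thesis using Y Y' unfolding inv_on_def by auto
  next
    case True
    define d where "d = vec n (\<lambda>m. Y i m - Y' i m)"
    have d: "d \<in> carrier_vec n" unfolding d_def by simp
    have "d = 0\<^sub>v n"
    proof (rule pd_zero[OF hpd d])
      fix l assume l: "l < n"
      show "d$l = 0 \<or> d \<bullet> col R l = 0"
      proof (cases "l \<in> K")
        case False then show ?thesis using Y Y' l unfolding inv_on_def d_def by auto
      next
        case lK: True
        have "d \<bullet> col R l = (\<Sum>m\<in>K. d$m * R$$(m,l))"
          by (rule sprod_supp[OF d R K _ l]) (use Y Y' in \<open>auto simp: d_def inv_on_def\<close>)
        also have "\<dots> = (\<Sum>m\<in>K. Y i m * R$$(m,l)) - (\<Sum>m\<in>K. Y' i m * R$$(m,l))"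
        proof -
          have "\<forall>m\<in>K. d$m * R$$(m,l) = Y i m * R$$(m,l) - Y' i m * R$$(m,l)"
            using K by (auto simp: d_def left_diff_distrib)
          then show ?thesis by (simp add: sum_subtractf)
        qed
        also have "\<dots> = 0" using Y Y' True lK unfolding inv_on_def by auto
        finally show ?thesis by simp
      qed
    qed
    then show ?thesis
    proof (cases "j < n")
      case True
      have "d $ j = 0" using \<open>d = 0\<^sub>v n\<close> True by simp
      then show ?thesis using True unfolding d_def by simp
    next
      case False
      then have "j \<notin> K" using K by auto
      then show ?thesis using Y Y' unfolding inv_on_def by auto
    qed
  qed
qed

lemma inv_shift:
  fixes r Y :: "nat \<Rightarrow> nat \<Rightarrow> complex"
  assumes inv: "inv_on r K Y" and T: "\<And>a b. a \<in> K \<Longrightarrow> b \<in> K \<Longrightarrow> r (a+s) (b+s) = r a b"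
  shows "inv_on r ((\<lambda>i. i+s) ` K) (\<lambda>i j. if s \<le> i \<and> s \<le> j then Y (i-s) (j-s) else 0)"
  unfolding inv_on_def
proof (intro conjI allI impI ballI)
  fix i j assume "i \<notin> (\<lambda>i. i+s) ` K \<or> j \<notin> (\<lambda>i. i+s) ` K"
  then have "\<not> (s \<le> i \<and> s \<le> j) \<or> i - s \<notin> K \<or> j - s \<notin> K"
    by (metis (no_types, lifting) image_eqI le_add_diff_inverse2)
  then show "(if s \<le> i \<and> s \<le> j then Y (i-s) (j-s) else 0) = 0"
    using inv unfolding inv_on_def by auto
next
  fix i j assume i: "i \<in> (\<lambda>i. i+s) ` K" and j: "j \<in> (\<lambda>i. i+s) ` K"
  then obtain a b where a: "a \<in> K" "i = a + s" and b: "b \<in> K" "j = b + s" by auto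
  have "(\<Sum>m\<in>(\<lambda>i. i+s) ` K. (if s \<le> i \<and> s \<le> m then Y (i-s) (m-s) else 0) * r m j)
      = (\<Sum>m\<in>K. Y a m * r (m+s) (b+s))"
    by (subst sum.reindex) (auto simp: a b inj_on_def)
  also have "\<dots> = (\<Sum>m\<in>K. Y a m * r m b)"
    using T a b by (intro sum.cong) auto
  also have "\<dots> = (if a = b then 1 else 0)" using inv a b unfolding inv_on_def by auto
  finally show "(\<Sum>m\<in>(\<lambda>i. i+s) ` K. (if s \<le> i \<and> s \<le> m then Y (i-s) (m-s) else 0) * r m j)
      = (if i = j then 1 else 0)" using a b by simp
qed



lemma block_idx: "r < n1*n2 \<Longrightarrow> c < n1*n2 \<Longrightarrow>
  block_mat n1 n2 B $$ (r,c) = B (r div n1) (c div n1) $$ (r mod n1, c mod n1)"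
  by (simp add: block_mat_def)

lemma block_carrier: "block_mat n1 n2 B \<in> carrier_mat (n1*n2) (n1*n2)"
  by (simp add: block_mat_def)

lemma bd_entry:
  assumes s: "s < n1*n2" and r: "r < n1*n2"
  shows "blockdiag n1 n2 (diag_of n1 f) $$ (s,r) = (if s = r then f (r mod n1) else 0)"
proof -
  have n1: "0 < n1" using s by (cases n1) auto
  have sm: "s mod n1 < n1" "r mod n1 < n1" using n1 by auto
  show ?thesis
  proof (cases "s div n1 = r div n1")
    case True
    have "(s = r) = (s mod n1 = r mod n1)"
      using True by (metis div_mult_mod_eq)
    then show ?thesis unfolding blockdiag_def block_idx[OF s r] using True sm
      by (simp add: diag_of_def)
  next
    case False
    then have "s \<noteq> r" by auto
    then show ?thesis unfolding blockdiag_def block_idx[OF s r] using False sm by simp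
  qed
qed

lemma mult_entry:
  fixes A B :: "complex mat"
  assumes "A \<in> carrier_mat N K" "B \<in> carrier_mat K M" "i < N" "j < M"
  shows "(A * B) $$ (i,j) = (\<Sum>r<K. A$$(i,r) * B$$(r,j))"
  using assms by (simp add: scalar_prod_def atLeast0LessThan)

lemma prod3:
  fixes L D :: "complex mat"
  assumes L: "L \<in> carrier_mat N N" and D: "D \<in> carrier_mat N N"
    and Dd: "\<And>s r. s < N \<Longrightarrow> r < N \<Longrightarrow> D$$(s,r) = (if s = r then g r else 0)"
    and i: "i < N" and j: "j < N"
  shows "(mat_adjoint L * D * L) $$ (i,j) = (\<Sum>r<N. cnj (L$$(r,i)) * g r * L$$(r,j))"
proof -
  have aL: "mat_adjoint L \<in> carrier_mat N N" by (rule adjoint_carrier[OF L])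
  have M: "(mat_adjoint L * D) $$ (i,r) = cnj (L$$(r,i)) * g r" if r: "r < N" for r
  proof -
    have "(mat_adjoint L * D) $$ (i,r) = (\<Sum>s<N. mat_adjoint L $$ (i,s) * D $$ (s,r))"
      by (rule mult_entry[OF aL D i r])
    also have "\<dots> = (\<Sum>s<N. if s = r then cnj (L$$(r,i)) * g r else 0)"
      using Dd r adjoint_index[OF L i] by (intro sum.cong) auto
    also have "\<dots> = cnj (L$$(r,i)) * g r" using r by simp
    finally show ?thesis .
  qed
  have aLD: "mat_adjoint L * D \<in> carrier_mat N N" using aL D by simp
  have "(mat_adjoint L * D * L) $$ (i,j) = (\<Sum>r<N. (mat_adjoint L * D) $$ (i,r) * L$$(r,j))"
    by (rule mult_entry[OF aLD L i j])
  also have "\<dots> = (\<Sum>r<N. cnj (L$$(r,i)) * g r * L$$(r,j))"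
    using M by simp
  finally show ?thesis .
qed


definition vf :: "nat \<Rightarrow> complex vec \<Rightarrow> nat \<Rightarrow> complex" where
  "vf n v i = (if i < n then v $ i else 0)"

lemma sprod_vf:
  fixes x :: "complex vec" and R :: "complex mat"
  assumes x: "x \<in> carrier_vec n" and R: "R \<in> carrier_mat n n" and K: "K \<subseteq> {..<n}"
    and xs: "\<And>m. m < n \<Longrightarrow> m \<notin> K \<Longrightarrow> x$m = 0" and j: "j < n"
  shows "(\<Sum>m\<in>K. vf n x m * R$$(m,j)) = x \<bullet> col R j"
proof -
  have "(\<Sum>m\<in>K. vf n x m * R$$(m,j)) = (\<Sum>m\<in>K. x$m * R$$(m,j))"
    using K by (intro sum.cong) (auto simp: vf_def)
  then show ?thesis using sprod_supp[OF x R K xs j] by simp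
qed

lemma ar1:
  assumes "0 < (n1::nat)" "a \<le> i div n1"
  shows "(i div n1 - a)*n1 + i mod n1 = i - a*n1"
proof -
  have "a*n1 \<le> i div n1 * n1" using assms by simp
  moreover have "i div n1 * n1 + i mod n1 = i" by simp
  ultimately show ?thesis by (simp add: diff_mult_distrib)
qed

lemma ar2:
  assumes "0 < (n1::nat)" "a < i div n1" "i div n1 < n2"
  shows "(n2 - 1 - (n2 - (i div n1 - a)))*n1 + i mod n1 = i - Suc a*n1"
proof -
  have "n2 - 1 - (n2 - (i div n1 - a)) = i div n1 - Suc a" using assms by simp
  then show ?thesis using ar1[of n1 "Suc a" i] assms by simp
qed

theorem mainTheorem5:
  fixes n1 n2 n :: nat and Rb :: "int \<Rightarrow> complex mat" and R :: "complex mat"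
    and P Q :: "nat \<Rightarrow> complex mat" and Lp Lq :: "complex mat"
  assumes n1: "n1 \<ge> 1" and n2: "n2 \<ge> 1" and n_def: "n = n1 * n2"
    and Rb_carrier: "\<And>m. \<bar>m\<bar> < int n2 \<Longrightarrow> Rb m \<in> carrier_mat n1 n1"
    and Rb_herm: "\<And>m. \<bar>m\<bar> < int n2 \<Longrightarrow> Rb (- m) = mat_adjoint (Rb m)"
    and R_def: "R = block_mat n1 n2 (\<lambda>a b. Rb (int b - int a))"
    and R_hpd: "herm_pos_def n R"
  defines "P \<equiv> \<lambda>j. mat n1 n1 (\<lambda>(i, c). pvec R n c (n - 1) $ (j * n1 + i))"
    and "Q \<equiv> \<lambda>j. mat n1 n1 (\<lambda>(i, c). qvec R n 0 (n - n1 + c) $ ((n2 - 1 - j) * n1 + i))"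
    and "Lp \<equiv> block_mat n1 n2 (\<lambda>a b. if a \<le> b then transpose_mat (P (b - a)) else 0\<^sub>m n1 n1)"
    and "Lq \<equiv> block_mat n1 n2 (\<lambda>a b. if a < b then transpose_mat (Q (n2 - (b - a))) else 0\<^sub>m n1 n1)"
  shows "inverts_mat R
           (mat_adjoint Lp * blockdiag n1 n2 (diag_of n1 (\<lambda>c. inverse (vcoef' R n c (n - 1)))) * Lp
            - mat_adjoint Lq * blockdiag n1 n2 (diag_of n1 (\<lambda>c. inverse (vcoef R n 0 (n - n1 + c)))) * Lq)
       \<and> inverts_mat
           (mat_adjoint Lp * blockdiag n1 n2 (diag_of n1 (\<lambda>c. inverse (vcoef' R n c (n - 1)))) * Lp
            - mat_adjoint Lq * blockdiag n1 n2 (diag_of n1 (\<lambda>c. inverse (vcoef R n 0 (n - n1 + c)))) * Lq) R"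
proof -
  have R: "R \<in> carrier_mat n n" and adjR: "mat_adjoint R = R"
    using R_hpd by (auto simp: herm_pos_def_def)
  have n1p: "0 < n1" using n1 by simp
  have nn1: "n1 \<le> n" using n2 n_def by simp
  have herm: "\<And>a b. a < n \<Longrightarrow> b < n \<Longrightarrow> cnj (R $$ (a,b)) = R $$ (b,a)"
    using adjoint_index[OF R] adjR by metis
  have toep: "\<And>a b. a < n - n1 \<Longrightarrow> b < n - n1 \<Longrightarrow> R $$ (a+n1, b+n1) = R $$ (a,b)"
  proof -
    fix a b assume a: "a < n - n1" and b: "b < n - n1"
    have a': "a + n1 < n1*n2" "a < n1*n2" and b': "b + n1 < n1*n2" "b < n1*n2" using a b n_def by auto
    have d: "(a+n1) div n1 = a div n1 + 1" "(b+n1) div n1 = b div n1 + 1"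
      "(a+n1) mod n1 = a mod n1" "(b+n1) mod n1 = b mod n1" using n1p by auto
    show "R $$ (a+n1, b+n1) = R $$ (a,b)"
      unfolding R_def block_idx[OF a'(1) b'(1)] block_idx[OF a'(2) b'(2)] d by simp
  qed
  define qc where "qc = (\<lambda>l. qvec R n 0 l)"
  define vq where "vq = (\<lambda>l. vcoef R n 0 l)"
  define pc where "pc = (\<lambda>c. pvec R n c (n - 1))"
  define vp where "vp = (\<lambda>c. vcoef' R n c (n - 1))"
  have qgood: "good R n 0 l (fst (grc R n l 0)) (qc l)" if "l < n" for l
    using grc_good[OF R_hpd, of 0 l] that by (simp add: qc_def qvec_def)
  have pgood: "good R n c (n-1) (pc c) (snd (grc R n (n-1-c) c))" if "c < n" for c
    using grc_good[OF R_hpd, of c "n-1-c"] that by (simp add: pc_def pvec_def)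
  have qcar: "qc l \<in> carrier_vec n" and qsup: "\<And>i. i < n \<Longrightarrow> l < i \<Longrightarrow> qc l $ i = 0"
    and ql: "qc l $ l = 1" and qorth: "\<And>j. j < l \<Longrightarrow> qc l \<bullet> col R j = 0"
    and vq0: "vq l \<noteq> 0" and vqd: "vq l = qc l \<bullet> col R l" if "l < n" for l
    using qgood[OF that] unfolding good_def vq_def vcoef_def qc_def by auto
  have pcar: "pc c \<in> carrier_vec n" and psup: "\<And>i. i < n \<Longrightarrow> i < c \<Longrightarrow> pc c $ i = 0"
    and pcc: "pc c $ c = 1" and porth: "\<And>j. c < j \<Longrightarrow> j < n \<Longrightarrow> pc c \<bullet> col R j = 0"
    and vp0: "vp c \<noteq> 0" and vpd: "vp c = pc c \<bullet> col R c" if "c < n" for c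
    using pgood[OF that] unfolding good_def vp_def vcoef'_def pc_def by auto
  let ?r = "\<lambda>i j. R $$ (i,j)"
  define Yf where "Yf = (\<lambda>l i j. \<Sum>t<l. cnj (vf n (qc t) i) * vf n (qc t) j / vq t)"
  have Yinv: "l \<le> n \<Longrightarrow> inv_on ?r {..<l} (Yf l)" for l
  proof (induction l)
    case 0 then show ?case by (simp add: inv_on_def Yf_def)
  next
    case (Suc l)
    then have ln: "l < n" by simp
    have K: "insert l {..<l} \<subseteq> {..<n}" using ln by auto
    have xs: "\<And>m. m < n \<Longrightarrow> m \<notin> insert l {..<l} \<Longrightarrow> qc l $ m = 0" using qsup[OF ln] by auto
    have eqY: "Yf (Suc l) = (\<lambda>i j. Yf l i j + cnj (vf n (qc l) i) * vf n (qc l) j / vq l)"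
      by (simp add: Yf_def)
    have "inv_on ?r (insert l {..<l}) (\<lambda>i j. Yf l i j + cnj (vf n (qc l) i) * vf n (qc l) j / vq l)"
    proof (rule border)
      show "cnj (R $$ (a, b)) = R $$ (b, a)" if "a \<in> insert l {..<l}" "b \<in> insert l {..<l}" for a b
        using herm that ln by auto
      show "inv_on ?r {..<l} (Yf l)" using Suc by simp
      show "vf n (qc l) l = 1" using ql[OF ln] ln by (simp add: vf_def)
      show "vf n (qc l) i = 0" if "i \<notin> insert l {..<l}" for i
        using that qsup[OF ln] by (auto simp: vf_def)
      show "(\<Sum>m\<in>insert l {..<l}. vf n (qc l) m * R $$ (m, j)) = 0" if "j \<in> {..<l}" for j
        using sprod_vf[OF qcar[OF ln] R K xs, of j] that ln qorth[OF ln, of j] by simp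
      show "vq l = (\<Sum>m\<in>insert l {..<l}. vf n (qc l) m * R $$ (m, l))"
        using sprod_vf[OF qcar[OF ln] R K xs ln] vqd[OF ln] by simp
      show "vq l \<noteq> 0" using vq0[OF ln] .
    qed auto
    then show ?case using eqY by (simp add: lessThan_Suc)
  qed
  define Sh where "Sh = (\<lambda>i j. if n1 \<le> i \<and> n1 \<le> j then Yf (n-n1) (i-n1) (j-n1) else 0)"
  have img: "(\<lambda>i. i+n1) ` {..<n-n1} = {n1..<n}"
  proof
    show "(\<lambda>i. i+n1) ` {..<n-n1} \<subseteq> {n1..<n}" by auto
    show "{n1..<n} \<subseteq> (\<lambda>i. i+n1) ` {..<n-n1}"
    proof
      fix x assume "x \<in> {n1..<n}"
      then have "x = (x - n1) + n1" "x - n1 \<in> {..<n-n1}" by auto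
      then show "x \<in> (\<lambda>i. i+n1) ` {..<n-n1}" by blast
    qed
  qed
  have Shinv: "inv_on ?r {n1..<n} Sh"
    using inv_shift[OF Yinv[of "n-n1"], of n1] toep unfolding img Sh_def by auto
  define W where "W = (\<lambda>m i j. Sh i j + (\<Sum>c\<in>{m..<n1}. cnj (vf n (pc c) i) * vf n (pc c) j / vp c))"
  have Winv: "inv_on ?r {m..<n} (W m)" if "m \<le> n1" for m
    using that
  proof (induction m rule: inc_induct)
    case base
    have "W n1 = Sh" by (simp add: W_def)
    then show ?case using Shinv by simp
  next
    case (step m)
    have mn: "m < n" using step.hyps nn1 by simp
    have K: "insert m {Suc m..<n} \<subseteq> {..<n}" using mn by auto
    have ins: "insert m {Suc m..<n} = {m..<n}" using mn by auto
    have xs: "\<And>i. i < n \<Longrightarrow> i \<notin> insert m {Suc m..<n} \<Longrightarrow> pc m $ i = 0"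
      using psup[OF mn] by auto
    have eqW: "W m = (\<lambda>i j. W (Suc m) i j + cnj (vf n (pc m) i) * vf n (pc m) j / vp m)"
      using step.hyps by (simp add: W_def sum.atLeast_Suc_lessThan algebra_simps)
    have "inv_on ?r (insert m {Suc m..<n}) (\<lambda>i j. W (Suc m) i j + cnj (vf n (pc m) i) * vf n (pc m) j / vp m)"
    proof (rule border)
      show "cnj (R $$ (a, b)) = R $$ (b, a)" if "a \<in> insert m {Suc m..<n}" "b \<in> insert m {Suc m..<n}" for a b
        using herm that mn by auto
      show "inv_on ?r {Suc m..<n} (W (Suc m))" using step.IH by simp
      show "vf n (pc m) m = 1" using pcc[OF mn] mn by (simp add: vf_def)
      show "vf n (pc m) i = 0" if "i \<notin> insert m {Suc m..<n}" for i
        using that psup[OF mn] by (auto simp: vf_def)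
      show "(\<Sum>i\<in>insert m {Suc m..<n}. vf n (pc m) i * R $$ (i, j)) = 0" if "j \<in> {Suc m..<n}" for j
        using sprod_vf[OF pcar[OF mn] R K xs, of j] that porth[OF mn, of j] by simp
      show "vp m = (\<Sum>i\<in>insert m {Suc m..<n}. vf n (pc m) i * R $$ (i, m))"
        using sprod_vf[OF pcar[OF mn] R K xs mn] vpd[OF mn] by simp
      show "vp m \<noteq> 0" using vp0[OF mn] .
    qed auto
    then show ?case using eqW ins by simp
  qed
  define Y where "Y = Yf n"
  have YW: "Y = W 0"
  proof -
    have Y1: "inv_on ?r {..<n} (Yf n)" using Yinv by simp
    have W1: "inv_on ?r {..<n} (W 0)" using Winv[of 0] by (simp add: atLeast0LessThan)
    show ?thesis using inv_unique[OF R_hpd _ Y1 W1] by (simp add: Y_def)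
  qed
  define G where "G = (\<lambda>i j. \<Sum>c<n1. cnj (vf n (qc (n-n1+c)) i) * vf n (qc (n-n1+c)) j / vq (n-n1+c))"
  define F where "F = (\<lambda>i j. \<Sum>c<n1. cnj (vf n (pc c) i) * vf n (pc c) j / vp c)"
  have Ysplit: "Y i j = Yf (n-n1) i j + G i j" for i j
  proof -
    have "n = (n - n1) + n1" using nn1 by simp
    then have "Yf n i j = Yf ((n - n1) + n1) i j" by simp
    then show ?thesis unfolding Y_def Yf_def G_def sum_lessThan_add by simp
  qed
  have rec: "Y i j = (if n1 \<le> i \<and> n1 \<le> j then Y (i-n1) (j-n1) - G (i-n1) (j-n1) else 0) + F i j" for i j
  proof -
    have "Y i j = W 0 i j" using YW by simp
    also have "\<dots> = Sh i j + F i j" by (simp add: W_def F_def atLeast0LessThan)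
    finally show ?thesis unfolding Sh_def using Ysplit by simp
  qed
  define shn where "shn = (\<lambda>a (Z::nat \<Rightarrow> nat \<Rightarrow> complex) i j. if a*n1 \<le> i \<and> a*n1 \<le> j then Z (i - a*n1) (j - a*n1) else 0)"
  have shstep: "shn m Y i j = shn (Suc m) Y i j - shn (Suc m) G i j + shn m F i j" for m i j
  proof (cases "m*n1 \<le> i \<and> m*n1 \<le> j")
    case True
    have e1: "(Suc m * n1 \<le> i) = (n1 \<le> i - m*n1)" "(Suc m * n1 \<le> j) = (n1 \<le> j - m*n1)"
      using True by auto
    have e2: "i - m*n1 - n1 = i - Suc m * n1" "j - m*n1 - n1 = j - Suc m * n1" by auto
    show ?thesis using True rec[of "i - m*n1" "j - m*n1"] unfolding shn_def e1 e2 by simp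
  next
    case False
    have h: "\<not> (Suc m * n1 \<le> i \<and> Suc m * n1 \<le> j)" using False by auto
    show ?thesis unfolding shn_def if_not_P[OF False] if_not_P[OF h] by simp
  qed
  have closed: "Y i j = shn m Y i j + (\<Sum>a<m. shn a F i j - shn (Suc a) G i j)" for m i j
  proof (induction m)
    case 0 then show ?case by (simp add: shn_def)
  next
    case (Suc m) then show ?case using shstep[of m i j] by simp
  qed
  have Yform: "Y i j = (\<Sum>a<n2. shn a F i j - shn (Suc a) G i j)" if "i < n" for i j
  proof -
    have "shn n2 Y i j = 0" using that n_def unfolding shn_def by (simp add: mult.commute)
    then show ?thesis using closed[of i j n2] by simp
  qed
  have idx: "(a*n1+c) div n1 = a" "(a*n1+c) mod n1 = c" "a*n1+c < n1*n2" if "a < n2" "c < n1" for a c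
  proof -
    show "(a*n1+c) div n1 = a" "(a*n1+c) mod n1 = c" using that by auto
    have "a*n1+c < (a+1)*n1" using that by simp
    also have "\<dots> \<le> n2*n1" using that by (intro mult_right_mono) auto
    finally show "a*n1+c < n1*n2" by (simp add: mult.commute)
  qed
  have imod: "i mod n1 < n1" for i using n1p by simp
  have Lp_entry: "Lp $$ (a*n1+c, i) = (if a*n1 \<le> i then pc c $ (i - a*n1) else 0)"
    if a: "a < n2" and c: "c < n1" and i: "i < n" for a c i
  proof -
    have i': "i < n1*n2" using i n_def by simp
    have e: "Lp $$ (a*n1+c, i) = (if a \<le> i div n1 then transpose_mat (P (i div n1 - a)) else 0\<^sub>m n1 n1) $$ (c, i mod n1)"
      unfolding Lp_def block_idx[OF idx(3)[OF a c] i'] idx(1,2)[OF a c] by simp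
    show ?thesis
    proof (cases "a \<le> i div n1")
      case True
      have "a*n1 \<le> i" using True less_eq_div_iff_mult_less_eq[OF n1p] by simp
      moreover have "transpose_mat (P (i div n1 - a)) $$ (c, i mod n1) = pc c $ (i - a*n1)"
        using c imod[of i] ar1[OF n1p True] by (simp add: P_def pc_def)
      ultimately show ?thesis using e True by simp
    next
      case False
      have "\<not> a*n1 \<le> i" using False less_eq_div_iff_mult_less_eq[OF n1p] by simp
      then show ?thesis using e False c imod[of i] by simp
    qed
  qed
  have Lq_entry: "Lq $$ (a*n1+c, i) = (if Suc a*n1 \<le> i then qc (n-n1+c) $ (i - Suc a*n1) else 0)"
    if a: "a < n2" and c: "c < n1" and i: "i < n" for a c i
  proof -
    have i': "i < n1*n2" using i n_def by simp
    have bn: "i div n1 < n2" using i' n1p by (simp add: div_less_iff_less_mult mult.commute)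
    have e: "Lq $$ (a*n1+c, i) = (if a < i div n1 then transpose_mat (Q (n2 - (i div n1 - a))) else 0\<^sub>m n1 n1) $$ (c, i mod n1)"
      unfolding Lq_def block_idx[OF idx(3)[OF a c] i'] idx(1,2)[OF a c] by simp
    show ?thesis
    proof (cases "a < i div n1")
      case True
      have "Suc a*n1 \<le> i" using True less_eq_div_iff_mult_less_eq[OF n1p, of "Suc a" i] by simp
      moreover have "transpose_mat (Q (n2 - (i div n1 - a))) $$ (c, i mod n1) = qc (n-n1+c) $ (i - Suc a*n1)"
        using c imod[of i] ar2[OF n1p True bn] by (simp add: Q_def qc_def)
      ultimately show ?thesis using e True by simp
    next
      case False
      have "\<not> Suc a*n1 \<le> i" using False less_eq_div_iff_mult_less_eq[OF n1p, of "Suc a" i] by simp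
      then show ?thesis using e False c imod[of i] by simp
    qed
  qed
  have Lpc: "Lp \<in> carrier_mat n n" and Lqc: "Lq \<in> carrier_mat n n"
    unfolding Lp_def Lq_def n_def by (rule block_carrier)+
  define D1 where "D1 = blockdiag n1 n2 (diag_of n1 (\<lambda>c. inverse (vcoef' R n c (n - 1))))"
  define D2 where "D2 = blockdiag n1 n2 (diag_of n1 (\<lambda>c. inverse (vcoef R n 0 (n - n1 + c))))"
  have D1c: "D1 \<in> carrier_mat n n" and D2c: "D2 \<in> carrier_mat n n"
    unfolding D1_def D2_def blockdiag_def n_def by (rule block_carrier)+
  have A1: "(mat_adjoint Lp * D1 * Lp) $$ (i,j) = (\<Sum>a<n2. shn a F i j)" if i: "i < n" and j: "j < n" for i j
  proof -
    have "(mat_adjoint Lp * D1 * Lp) $$ (i,j) = (\<Sum>r<n. cnj (Lp$$(r,i)) * inverse (vp (r mod n1)) * Lp$$(r,j))"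
      by (rule prod3[OF Lpc D1c _ i j]) (simp add: D1_def bd_entry n_def vp_def)
    also have "\<dots> = (\<Sum>a<n2. \<Sum>c<n1. cnj (Lp$$(a*n1+c,i)) * inverse (vp ((a*n1+c) mod n1)) * Lp$$(a*n1+c,j))"
      unfolding n_def by (rule sum_lessThan_mult)
    also have "\<dots> = (\<Sum>a<n2. shn a F i j)"
    proof (rule sum.cong[OF refl])
      fix a assume a: "a \<in> {..<n2}"
      show "(\<Sum>c<n1. cnj (Lp$$(a*n1+c,i)) * inverse (vp ((a*n1+c) mod n1)) * Lp$$(a*n1+c,j)) = shn a F i j"
      proof (cases "a*n1 \<le> i \<and> a*n1 \<le> j")
        case True
        have "shn a F i j = (\<Sum>c<n1. cnj (vf n (pc c) (i - a*n1)) * vf n (pc c) (j - a*n1) / vp c)"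
          using True by (simp add: shn_def F_def)
        also have "\<dots> = (\<Sum>c<n1. cnj (Lp$$(a*n1+c,i)) * inverse (vp ((a*n1+c) mod n1)) * Lp$$(a*n1+c,j))"
          using True a i j less_imp_diff_less[OF i] less_imp_diff_less[OF j] by (intro sum.cong refl) (simp add: Lp_entry idx vf_def divide_inverse)
        finally show ?thesis by simp
      next
        case False
        have "shn a F i j = 0" unfolding shn_def if_not_P[OF False] by simp
        moreover have "\<forall>c\<in>{..<n1}. cnj (Lp$$(a*n1+c,i)) * inverse (vp ((a*n1+c) mod n1)) * Lp$$(a*n1+c,j) = 0"
          using False a i j by (auto simp: Lp_entry)
        then have "(\<Sum>c<n1. cnj (Lp$$(a*n1+c,i)) * inverse (vp ((a*n1+c) mod n1)) * Lp$$(a*n1+c,j)) = 0" by (rule sum.neutral)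
        ultimately show ?thesis by simp
      qed
    qed
    finally show ?thesis .
  qed
  have A2: "(mat_adjoint Lq * D2 * Lq) $$ (i,j) = (\<Sum>a<n2. shn (Suc a) G i j)" if i: "i < n" and j: "j < n" for i j
  proof -
    have "(mat_adjoint Lq * D2 * Lq) $$ (i,j) = (\<Sum>r<n. cnj (Lq$$(r,i)) * inverse (vq (n - n1 + r mod n1)) * Lq$$(r,j))"
      by (rule prod3[OF Lqc D2c _ i j]) (simp add: D2_def bd_entry n_def vq_def)
    also have "\<dots> = (\<Sum>a<n2. \<Sum>c<n1. cnj (Lq$$(a*n1+c,i)) * inverse (vq (n - n1 + (a*n1+c) mod n1)) * Lq$$(a*n1+c,j))"
      unfolding n_def by (rule sum_lessThan_mult)
    also have "\<dots> = (\<Sum>a<n2. shn (Suc a) G i j)"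
    proof (rule sum.cong[OF refl])
      fix a assume a: "a \<in> {..<n2}"
      show "(\<Sum>c<n1. cnj (Lq$$(a*n1+c,i)) * inverse (vq (n - n1 + (a*n1+c) mod n1)) * Lq$$(a*n1+c,j)) = shn (Suc a) G i j"
      proof (cases "Suc a*n1 \<le> i \<and> Suc a*n1 \<le> j")
        case True
        have "shn (Suc a) G i j = (\<Sum>c<n1. cnj (vf n (qc (n-n1+c)) (i - Suc a*n1)) * vf n (qc (n-n1+c)) (j - Suc a*n1) / vq (n-n1+c))"
          using True by (simp add: shn_def G_def del: mult_Suc)
        also have "\<dots> = (\<Sum>c<n1. cnj (Lq$$(a*n1+c,i)) * inverse (vq (n - n1 + (a*n1+c) mod n1)) * Lq$$(a*n1+c,j))"
          using True a i j less_imp_diff_less[OF i] less_imp_diff_less[OF j] by (intro sum.cong refl) (simp add: Lq_entry idx vf_def divide_inverse del: mult_Suc)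
        finally show ?thesis by simp
      next
        case False
        have "shn (Suc a) G i j = 0" unfolding shn_def if_not_P[OF False] by simp
        moreover have "\<forall>c\<in>{..<n1}. cnj (Lq$$(a*n1+c,i)) * inverse (vq (n - n1 + (a*n1+c) mod n1)) * Lq$$(a*n1+c,j) = 0"
          using False a i j by (auto simp: Lq_entry simp del: mult_Suc)
        then have "(\<Sum>c<n1. cnj (Lq$$(a*n1+c,i)) * inverse (vq (n - n1 + (a*n1+c) mod n1)) * Lq$$(a*n1+c,j)) = 0" by (rule sum.neutral)
        ultimately show ?thesis by simp
      qed
    qed
    finally show ?thesis .
  qed
  define X where "X = mat_adjoint Lp * D1 * Lp - mat_adjoint Lq * D2 * Lq"
  have Xc: "X \<in> carrier_mat n n"
    unfolding X_def using adjoint_carrier[OF Lpc] adjoint_carrier[OF Lqc] Lpc Lqc D1c D2c by auto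
  have Xe: "X $$ (i,j) = Y i j" if i: "i < n" and j: "j < n" for i j
  proof -
    have c1: "mat_adjoint Lp * D1 * Lp \<in> carrier_mat n n" and c2: "mat_adjoint Lq * D2 * Lq \<in> carrier_mat n n"
      using adjoint_carrier[OF Lpc] adjoint_carrier[OF Lqc] Lpc Lqc D1c D2c by auto
    have "X $$ (i,j) = (mat_adjoint Lp * D1 * Lp) $$ (i,j) - (mat_adjoint Lq * D2 * Lq) $$ (i,j)"
      unfolding X_def by (rule index_minus_mat(1)) (use c2 i j in auto)
    also have "\<dots> = (\<Sum>a<n2. shn a F i j) - (\<Sum>a<n2. shn (Suc a) G i j)" using A1[OF i j] A2[OF i j] by simp
    also have "\<dots> = Y i j" using Yform[OF i, of j] by (simp add: sum_subtractf)
    finally show ?thesis .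
  qed
  have Yi: "inv_on ?r {..<n} Y" using Yinv[of n] by (simp add: Y_def)
  have XR: "X * R = 1\<^sub>m n"
  proof (rule eq_matI)
    fix i j assume i: "i < dim_row (1\<^sub>m n :: complex mat)" and j: "j < dim_col (1\<^sub>m n :: complex mat)"
    then have i: "i < n" and j: "j < n" by auto
    have "(X * R) $$ (i,j) = (\<Sum>m<n. X$$(i,m) * R$$(m,j))" by (rule mult_entry[OF Xc R i j])
    also have "\<dots> = (\<Sum>m<n. Y i m * R$$(m,j))" using Xe i by simp
    also have "\<dots> = (if i = j then 1 else 0)" using Yi i j unfolding inv_on_def by auto
    finally show "(X * R) $$ (i,j) = 1\<^sub>m n $$ (i,j)" using i j by simp
  qed (use Xc R in auto)
  have RX: "R * X = 1\<^sub>m n" by (rule mat_mult_left_right_inverse[OF Xc R XR])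
  have "inverts_mat R X \<and> inverts_mat X R"
    unfolding inverts_mat_def using RX XR R Xc by simp
  then show ?thesis unfolding X_def D1_def D2_def .
qed

end
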